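(* Let $N \ge 1$ and let $-1 \le \tau_0 < \tau_1 < \cdots < \tau_N \le 1$ be distinct points. Let $x$ be continuously differentiable on $[-1,+1]$ and let $x^N \in \mathcal{P}_N$ be the unique polynomial with $x^N(\tau_k) = x(\tau_k)$ for $0 \le k \le N$. Then \[ \|\dot{x}-\dot{x}^N\| \le (1+2N^2)\inf_{q\in\mathcal{P}_N}\|\dot{x}-\dot{q}\| + N^2(1+\Lambda_N)\inf_{p\in\mathcal{P}_N}\|x-p\|, \] where $\Lambda_N$ is the Lebesgue constant of the point set $\{\tau_0,\dots,\tau_N\}$.
   Context: $\mathcal{P}_N$ denotes the space of real polynomials of degree at most $N$, and $\|\cdot\|$ denotes the sup-norm on $[-1,+1]$. A dot denotes differentiation. For a point set $\{\tau_0,\dots,\tau_N\}$ the Lagrange polynomials are $L_i(\tau)=\prod_{j=0,\,j\ne i}^N \frac{\tau-\tau_j}{\tau_i-\tau_j}$, $0\le i\le N$, and the Lebesgue constant is $\Lambda_N=\max\{\sum_{j=0}^N |L_j(\tau)| : \tau\in[-1,1]\}$. *)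

theory Defs
  imports "HOL-Analysis.Analysis" "HOL-Computational_Algebra.Polynomial"
begin

definition supnorm :: "(real \<Rightarrow> real) \<Rightarrow> real" where
  "supnorm f = (SUP t\<in>{-1..1}. \<bar>f t\<bar>)"

definition lagrange_basis :: "(nat \<Rightarrow> real) \<Rightarrow> nat \<Rightarrow> nat \<Rightarrow> real \<Rightarrow> real" where
  "lagrange_basis \<tau> N i t = (\<Prod>j\<in>{0..N} - {i}. (t - \<tau> j) / (\<tau> i - \<tau> j))"

definition lebesgue_const :: "(nat \<Rightarrow> real) \<Rightarrow> nat \<Rightarrow> real" where
  "lebesgue_const \<tau> N = (SUP t\<in>{-1..1}. (\<Sum>j\<in>{0..N}. \<bar>lagrange_basis \<tau> N j t\<bar>))"

end

theory Submission
  imports Defs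
begin


lemma lagrange_interp:
  fixes r :: "real poly" and I :: "'a set" and \<tau> :: "'a \<Rightarrow> real"
  assumes fin: "finite I" and inj: "inj_on \<tau> I" and deg: "degree r < card I"
  shows "poly r t = (\<Sum>j\<in>I. poly r (\<tau> j) * (\<Prod>i\<in>I-{j}. (t - \<tau> i)/(\<tau> j - \<tau> i)))"
proof -
  define L where "L j = (\<Prod>i\<in>I-{j}. smult (1/(\<tau> j - \<tau> i)) [:-\<tau> i, 1:])" for j
  define S where "S = (\<Sum>j\<in>I. smult (poly r (\<tau> j)) (L j))"
  have polyL: "poly (L j) t = (\<Prod>i\<in>I-{j}. (t - \<tau> i)/(\<tau> j - \<tau> i))" for j t
    unfolding L_def poly_prod by (intro prod.cong) (auto simp: diff_divide_distrib)
  have degL: "degree (L j) \<le> card I - 1" if "j \<in> I" for j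
  proof -
    have "degree (L j) \<le> sum (degree \<circ> (\<lambda>i. smult (1/(\<tau> j - \<tau> i)) [:-\<tau> i, 1:])) (I-{j})"
      unfolding L_def by (rule degree_prod_sum_le) (use fin in simp)
    also have "\<dots> \<le> (\<Sum>i\<in>I-{j}. 1)"
      by (intro sum_mono) (auto simp: degree_smult_le)
    also have "\<dots> = card I - 1" using that fin by simp
    finally show ?thesis .
  qed
  have degS: "degree S < card I"
  proof -
    have "degree S \<le> card I - 1" unfolding S_def
      by (intro degree_sum_le fin) (use degL degree_smult_le order_trans in blast)
    with deg show ?thesis by linarith
  qed
  have val: "poly S (\<tau> k) = poly r (\<tau> k)" if k: "k \<in> I" for k
  proof -
    have z: "poly (L j) (\<tau> k) = 0" if "j \<in> I" "j \<noteq> k" for j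
      unfolding polyL using that k fin by (intro prod_zero) auto
    have o: "poly (L k) (\<tau> k) = 1"
      unfolding polyL using k inj by (intro prod.neutral) (auto simp: inj_on_def)
    have "poly S (\<tau> k) = (\<Sum>j\<in>I. poly r (\<tau> j) * poly (L j) (\<tau> k))"
      unfolding S_def by (simp add: poly_sum)
    also have "\<dots> = poly r (\<tau> k) * poly (L k) (\<tau> k)"
      using fin k z by (subst sum.remove[of _ k]) (auto intro!: sum.neutral)
    finally show ?thesis using o by simp
  qed
  have cardA: "card (\<tau> ` I) = card I" using inj by (simp add: card_image)
  have "r = S"
    by (rule poly_eqI_degree[where A="\<tau> ` I"]) (use val cardA deg degS in auto)
  then have "poly r t = poly S t" by simp
  also have "\<dots> = (\<Sum>j\<in>I. poly r (\<tau> j) * (\<Prod>i\<in>I-{j}. (t - \<tau> i)/(\<tau> j - \<tau> i)))"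
    by (simp add: S_def poly_sum polyL)
  finally show ?thesis .
qed




fun cheb :: "nat \<Rightarrow> real poly" where
  "cheb 0 = 1"
| "cheb (Suc 0) = [:0,1:]"
| "cheb (Suc (Suc n)) = [:0,2:] * cheb (Suc n) - cheb n"

lemma cheb_cos: "poly (cheb n) (cos th) = cos (real n * th)"
proof (induction n rule: cheb.induct)
  case (3 n)
  have e: "cos (real (Suc (Suc n)) * th) = 2 * cos th * cos (real (Suc n) * th) - cos (real n * th)"
  proof -
    have a: "real (Suc (Suc n)) * th = real (Suc n) * th + th" by (simp add: algebra_simps)
    have b: "real n * th = real (Suc n) * th - th" by (simp add: algebra_simps)
    show ?thesis unfolding a b cos_add cos_diff by simp
  qed
  have "poly (cheb (Suc (Suc n))) (cos th) = 2 * cos th * poly (cheb (Suc n)) (cos th) - poly (cheb n) (cos th)"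
    by simp
  also have "\<dots> = 2 * cos th * cos (real (Suc n) * th) - cos (real n * th)"
    by (simp only: 3)
  finally show ?case by (simp only: e)
qed auto

lemma cheb_degree: "degree (cheb n) \<le> n"
proof (induction n rule: cheb.induct)
  case (3 n)
  have "degree ([:0,2:] * cheb (Suc n)) \<le> Suc (Suc n)"
    using degree_mult_le[of "[:0,2:]" "cheb (Suc n)"] 3(1) by simp
  moreover have "degree (cheb n) \<le> Suc (Suc n)" using 3(2) by simp
  ultimately show ?case by (simp add: degree_diff_le)
qed auto

lemma cheb_lead: "coeff (cheb (Suc n)) (Suc n) = 2 ^ n"
proof (induction n rule: nat_less_induct)
  case (1 n)
  show ?case
  proof (cases n)
    case 0 then show ?thesis by simp
  next
    case (Suc m)
    have "coeff (cheb m) (Suc (Suc m)) = 0"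
      using cheb_degree[of m] by (intro coeff_eq_0) simp
    then show ?thesis using 1 Suc by (simp add: mult_pCons_left)
  qed
qed

lemma cheb_one: "poly (cheb n) 1 = 1"
  using cheb_cos[of n 0] by simp

lemma cheb_deriv_one: "poly (pderiv (cheb n)) 1 = real n ^ 2"
proof (induction n rule: cheb.induct)
  case (3 n)
  show ?case using 3 by (simp add: pderiv_mult pderiv_pCons pderiv_diff pderiv_smult cheb_one power2_eq_square algebra_simps)
qed (auto simp: pderiv_pCons)

lemma cheb_deriv_cos: "poly (pderiv (cheb n)) (cos th) * sin th = real n * sin (real n * th)"
proof -
  have d1: "((\<lambda>th. poly (cheb n) (cos th)) has_real_derivative poly (pderiv (cheb n)) (cos th) * (- sin th)) (at th)"
    by (rule DERIV_chain2[OF poly_DERIV]) (rule DERIV_cos)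
  have d2: "((\<lambda>th. cos (real n * th)) has_real_derivative - sin (real n * th) * real n) (at th)"
    by (auto intro!: derivative_eq_intros)
  have "(\<lambda>th. poly (cheb n) (cos th)) = (\<lambda>th. cos (real n * th))" by (simp add: cheb_cos)
  with d1 d2 have "poly (pderiv (cheb n)) (cos th) * (- sin th) = - sin (real n * th) * real n"
    using DERIV_unique by metis
  then show ?thesis by simp
qed




definition cth :: "nat \<Rightarrow> nat \<Rightarrow> real" where
  "cth n j = real (2*j+1) * pi / (2 * real n)"
definition cnd :: "nat \<Rightarrow> nat \<Rightarrow> real" where
  "cnd n j = cos (cth n j)"

lemma cth_pos: "n \<ge> 1 \<Longrightarrow> 0 < cth n j"
  by (simp add: cth_def)

lemma cth_lt_pi: assumes "j < n" shows "cth n j < pi"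
proof -
  have "real (2*j+1) < 2 * real n" using assms by linarith
  then have "real (2*j+1) * pi < 2 * real n * pi" by simp
  then show ?thesis using assms by (simp add: cth_def field_simps)
qed

lemma cth_mono: assumes "j < k" "n \<ge> 1" shows "cth n j < cth n k"
  using assms by (simp add: cth_def field_simps)

lemma cnd_mono: assumes "j < k" "k < n" shows "cnd n k < cnd n j"
proof -
  have "n \<ge> 1" using assms by simp
  then have "0 \<le> cth n j" "0 \<le> cth n k" using cth_pos less_imp_le by blast+
  then show ?thesis
  unfolding cnd_def using assms cth_mono[of j k n] cth_lt_pi[of k n] cth_lt_pi[of j n]
  by (subst cos_mono_less_eq) auto
qed

lemma cnd_inj: "inj_on (cnd n) {..<n}"
proof (rule inj_onI)
  fix j k assume "j \<in> {..<n}" "k \<in> {..<n}" "cnd n j = cnd n k"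
  then show "j = k" using cnd_mono[of j k n] cnd_mono[of k j n] by (cases j k rule: linorder_cases) auto
qed

lemma cnd_le0: "j < n \<Longrightarrow> cnd n j \<le> cnd n 0"
  using cnd_mono[of 0 j n] by (cases j) auto

lemma cos_cth: assumes "n \<ge> 1" shows "cos (real n * cth n j) = 0"
proof -
  have "real n * cth n j = of_int (int (2*j+1)) * (pi/2)" using assms by (simp add: cth_def)
  then show ?thesis by (subst cos_zero_iff_int) (auto intro!: exI[of _ "int (2*j+1)"])
qed

lemma sin_cth: assumes "n \<ge> 1" shows "\<bar>sin (real n * cth n j)\<bar> = 1"
proof -
  have "sin (real n * cth n j) ^ 2 = 1" using sin_cos_squared_add[of "real n * cth n j"] cos_cth[OF assms] by simp
  then show ?thesis by (metis abs_power2 power2_eq_1_iff abs_1 abs_abs abs_neg_one)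
qed

lemma sin_cth_pos: "n \<ge> 1 \<Longrightarrow> j < n \<Longrightarrow> 0 < sin (cth n j)"
  using cth_pos cth_lt_pi sin_gt_zero by blast

definition W :: "nat \<Rightarrow> real poly" where
  "W n = (\<Prod>i<n. [:- cnd n i, 1:])"

lemma W_degree: "degree (W n) = n"
  unfolding W_def by (subst degree_prod_eq_sum_degree) auto

lemma W_lead: "coeff (W n) n = 1"
proof -
  have "coeff (W n) n = lead_coeff (W n)" using W_degree by simp
  also have "\<dots> = 1" unfolding W_def lead_coeff_prod by simp
  finally show ?thesis .
qed

lemma cheb_W: assumes "n \<ge> 1" shows "cheb n = smult (2^(n-1)) (W n)"
proof (rule poly_eqI_degree_lead_coeff[where n=n and A="cnd n ` {..<n}"])
  obtain m where m: "n = Suc m" using assms by (cases n) auto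
  show "coeff (cheb n) n = coeff (smult (2^(n-1)) (W n)) n" using cheb_lead[of m] W_lead m by simp
  show "n \<le> card (cnd n ` {..<n})" using cnd_inj by (simp add: card_image)
  show "degree (cheb n) \<le> n" by (rule cheb_degree)
  show "degree (smult (2^(n-1)) (W n)) \<le> n" using W_degree degree_smult_le by (metis)
  fix z assume "z \<in> cnd n ` {..<n}"
  then obtain j where j: "j < n" "z = cnd n j" by auto
  have "poly (cheb n) z = 0" using j cheb_cos[of n "cth n j"] cos_cth[OF assms] by (simp add: cnd_def)
  moreover have "poly (W n) z = 0" unfolding W_def poly_prod using j by (intro prod_zero) auto
  ultimately show "poly (cheb n) z = poly (smult (2^(n-1)) (W n)) z" by simp
qed

lemma W_deriv: "poly (pderiv (W n)) x = (\<Sum>a<n. \<Prod>i\<in>{..<n}-{a}. (x - cnd n i))"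
  unfolding W_def pderiv_prod poly_sum poly_mult poly_prod by (simp add: pderiv_pCons)

lemma W_deriv_node: assumes "j < n"
  shows "poly (pderiv (W n)) (cnd n j) = (\<Prod>i\<in>{..<n}-{j}. (cnd n j - cnd n i))"
proof -
  have "(\<Sum>a<n. \<Prod>i\<in>{..<n}-{a}. (cnd n j - cnd n i)) = (\<Prod>i\<in>{..<n}-{j}. (cnd n j - cnd n i))"
    using assms by (subst sum.remove[of _ j]) (auto intro!: sum.neutral prod_zero)
  then show ?thesis by (simp add: W_deriv)
qed

lemma D_node: assumes "n \<ge> 1" "j < n"
  shows "\<bar>\<Prod>i\<in>{..<n}-{j}. (cnd n j - cnd n i)\<bar> * sin (cth n j) = real n / 2^(n-1)"
proof -
  have "poly (pderiv (cheb n)) (cnd n j) * sin (cth n j) = real n * sin (real n * cth n j)"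
    unfolding cnd_def by (rule cheb_deriv_cos)
  then have "2^(n-1) * (\<Prod>i\<in>{..<n}-{j}. (cnd n j - cnd n i)) * sin (cth n j) = real n * sin (real n * cth n j)"
    using W_deriv_node[OF assms(2)] by (simp add: cheb_W[OF assms(1)] pderiv_smult)
  then have "\<bar>2^(n-1) * (\<Prod>i\<in>{..<n}-{j}. (cnd n j - cnd n i)) * sin (cth n j)\<bar> = real n"
    using sin_cth[OF assms(1)] by (simp add: abs_mult)
  then show ?thesis using sin_cth_pos[OF assms] by (simp add: abs_mult field_simps)
qed

lemma D_one: assumes "n \<ge> 1"
  shows "(\<Sum>a<n. \<Prod>i\<in>{..<n}-{a}. (1 - cnd n i)) = real n ^ 2 / 2^(n-1)"
proof -
  have "real n ^ 2 = poly (pderiv (cheb n)) 1" by (simp add: cheb_deriv_one)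
  also have "\<dots> = 2^(n-1) * (\<Sum>a<n. \<Prod>i\<in>{..<n}-{a}. (1 - cnd n i))"
    by (simp add: cheb_W[OF assms] pderiv_smult W_deriv)
  finally show ?thesis by (simp add: field_simps)
qed




lemma aux_inv: fixes d s c m :: real assumes "d * s = m / c" "s > 0" "c > 0" "m > 0" "d \<noteq> 0"
  shows "1 / d = s * c / m"
  using assms by (simp add: field_simps)

lemma aux_re: fixes a p d s c m :: real assumes "1 / d = s * c / m"
  shows "a * p / d = (a * s) * (c / m) * p"
proof -
  have "a * p / d = a * p * (1 / d)" by simp
  also have "\<dots> = (a * s) * (c / m) * p" unfolding assms by simp
  finally show ?thesis .
qed

lemma schur_out:
  assumes n: "n \<ge> 1" and dq: "degree q < n"
    and hq: "\<And>j. j < n \<Longrightarrow> \<bar>poly q (cnd n j)\<bar> * sin (cth n j) \<le> M"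
    and x: "cnd n 0 \<le> x" "x \<le> 1"
  shows "\<bar>poly q x\<bar> \<le> real n * M"
proof -
  define c :: real where "c = 2^(n-1)"
  have cpos: "c > 0" by (simp add: c_def)
  let ?P = "\<lambda>j y. \<Prod>i\<in>{..<n}-{j}. (y - cnd n i)"
  let ?D = "\<lambda>j. \<Prod>i\<in>{..<n}-{j}. (cnd n j - cnd n i)"
  have M0: "0 \<le> M"
  proof -
    have "0 \<le> \<bar>poly q (cnd n 0)\<bar> * sin (cth n 0)" using sin_cth_pos[OF n, of 0] n by simp
    with hq[of 0] n show ?thesis by linarith
  qed
  have xn: "0 \<le> x - cnd n i" "x - cnd n i \<le> 1 - cnd n i" if "i < n" for i using cnd_le0[OF that] x by linarith+
  have interp: "poly q x = (\<Sum>j<n. poly q (cnd n j) * (\<Prod>i\<in>{..<n}-{j}. (x - cnd n i)/(cnd n j - cnd n i)))"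
    using lagrange_interp[of "{..<n}" "cnd n" q x] cnd_inj dq by simp
  have fac: "(\<Prod>i\<in>{..<n}-{j}. (x - cnd n i)/(cnd n j - cnd n i)) = ?P j x / ?D j" for j
    by (simp add: prod_dividef)
  have Pnn: "0 \<le> ?P j x" for j
    by (intro prod_nonneg) (use xn(1) in auto)
  have Pmono: "?P j x \<le> ?P j 1" for j
    by (intro prod_mono) (use xn in auto)
  have tm: "\<bar>poly q (cnd n j) * (?P j x / ?D j)\<bar> \<le> M * c / real n * ?P j x" if j: "j < n" for j
  proof -
    have s: "0 < sin (cth n j)" using sin_cth_pos[OF n j] .
    have Dn: "\<bar>?D j\<bar> * sin (cth n j) = real n / c" using D_node[OF n j] by (simp add: c_def)
    have Dnz: "\<bar>?D j\<bar> \<noteq> 0"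
    proof
      assume h: "\<bar>?D j\<bar> = 0"
      have "real n / c = 0" using Dn unfolding h by simp
      with n cpos show False by simp
    qed
    have "\<bar>poly q (cnd n j) * (?P j x / ?D j)\<bar> = \<bar>poly q (cnd n j)\<bar> * ?P j x / \<bar>?D j\<bar>"
      using Pnn[of j] by (simp add: abs_mult)
    also have "\<dots> = (\<bar>poly q (cnd n j)\<bar> * sin (cth n j)) * (c / real n) * ?P j x"
    proof -
      have "1 / \<bar>?D j\<bar> = sin (cth n j) * c / real n"
        using Dn Dnz s cpos n by (intro aux_inv) auto
      then show ?thesis by (rule aux_re)
    qed
    also have "\<dots> \<le> M * (c / real n) * ?P j x"
      using hq[OF j] Pnn[of j] cpos n by (intro mult_right_mono) auto
    finally show ?thesis by simp
  qed
  have "\<bar>poly q x\<bar> \<le> (\<Sum>j<n. \<bar>poly q (cnd n j) * (?P j x / ?D j)\<bar>)"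
    unfolding interp fac by (rule sum_abs)
  also have "\<dots> \<le> (\<Sum>j<n. M * c / real n * ?P j x)"
    by (intro sum_mono tm) auto
  also have "\<dots> \<le> (\<Sum>j<n. M * c / real n * ?P j 1)"
    using M0 cpos Pmono by (intro sum_mono mult_left_mono) auto
  also have "\<dots> = M * c / real n * (\<Sum>j<n. ?P j 1)"
    by (simp only: sum_distrib_left)
  also have "\<dots> = M * c / real n * (real n ^ 2 / c)"
    using D_one[OF n] by (simp add: c_def)
  also have "\<dots> = real n * M" using cpos n by (simp add: field_simps power2_eq_square)
  finally show ?thesis .
qed




lemma sum_even_odd_pairs: "(\<Sum>i<2*n. g i) = (\<Sum>i<n. g (2*i) + g (2*i+1))" for g :: "nat \<Rightarrow> real"
  by (induction n) (simp_all add: algebra_simps)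

lemma odd_diff:
  fixes u v :: real
  shows "(u - v)^m - (u + v)^m = -2 * (\<Sum>j\<le>m. real (m choose (2*j+1)) * v^(2*j+1) * u^(m-(2*j+1)))"
proof -
  define g where "g k = real (m choose k) * ((-1)^k - 1) * v^k * u^(m-k)" for k
  have "(u - v)^m = (\<Sum>k\<le>m. real (m choose k) * (-v)^k * u^(m-k))"
    using binomial_ring[of "-v" u m] by simp
  moreover have "(u + v)^m = (\<Sum>k\<le>m. real (m choose k) * v^k * u^(m-k))"
    using binomial_ring[of v u m] by (simp add: add.commute)
  ultimately have "(u - v)^m - (u + v)^m = (\<Sum>k\<le>m. real (m choose k) * (-v)^k * u^(m-k) - real (m choose k) * v^k * u^(m-k))"
    by (simp add: sum_subtractf)
  also have "\<dots> = (\<Sum>k\<le>m. g k)"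
  proof (intro sum.cong refl)
    fix k
    have "(-v)^k = (-1)^k * v^k" by (rule power_minus)
    then show "real (m choose k) * (-v)^k * u^(m-k) - real (m choose k) * v^k * u^(m-k) = g k"
      unfolding g_def by (simp only: left_diff_distrib right_diff_distrib mult.assoc mult_1 mult_1_right)
  qed
  also have "\<dots> = (\<Sum>k<2*(m+1). g k)"
  proof (rule sum.mono_neutral_left)
    show "\<forall>i\<in>{..<2 * (m + 1)} - {..m}. g i = 0" by (auto simp: g_def)
  qed auto
  also have "\<dots> = (\<Sum>j<m+1. g (2*j) + g (2*j+1))" by (rule sum_even_odd_pairs)
  also have "\<dots> = (\<Sum>j\<le>m. -2 * (real (m choose (2*j+1)) * v^(2*j+1) * u^(m-(2*j+1))))"
    by (intro sum.cong) (auto simp: g_def)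
  finally show ?thesis by (simp add: sum_distrib_left)
qed

definition Qm :: "real \<Rightarrow> real \<Rightarrow> nat \<Rightarrow> real poly" where
  "Qm a b m = smult (-2) (\<Sum>j\<le>m. smult (real (m choose (2*j+1)) * b^(2*j+1)) ([:0,a:]^(m-(2*j+1)) * [:1,0,-1:]^j))"

lemma Qm_poly: "poly (Qm a b m) c = -2 * (\<Sum>j\<le>m. real (m choose (2*j+1)) * b^(2*j+1) * (a*c)^(m-(2*j+1)) * (1 - c^2)^j)"
proof -
  have h1: "poly [:0,a:] c = a*c" and h2: "poly [:1,0,-1:] c = 1 - c^2" by (simp_all add: power2_eq_square)
  show ?thesis unfolding Qm_def poly_smult poly_sum poly_mult poly_power h1 h2 by (simp only: mult.assoc)
qed

lemma Qm_eq: assumes "s^2 = 1 - c^2"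
  shows "s * poly (Qm a b m) c = (a*c - b * s)^m - (a*c + b * s)^m"
proof -
  have "(a*c - b * s)^m - (a*c + b * s)^m = -2 * (\<Sum>j\<le>m. real (m choose (2*j+1)) * (b * s)^(2*j+1) * (a*c)^(m-(2*j+1)))"
    by (rule odd_diff)
  also have "\<dots> = s * poly (Qm a b m) c"
    unfolding Qm_poly sum_distrib_left
  proof (intro sum.cong refl)
    fix j
    have e1: "s^(2*j) = (1 - c^2)^j" by (simp only: power_mult assms)
    have e2: "(b * s)^(2*j+1) = b^(2*j+1) * (s^(2*j) * s)" by (simp add: power_mult_distrib)
    show "-2 * (real (m choose (2*j+1)) * (b * s)^(2*j+1) * (a*c)^(m-(2*j+1))) =
      s * (-2 * (real (m choose (2*j+1)) * b^(2*j+1) * (a*c)^(m-(2*j+1)) * (1 - c^2)^j))"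
      unfolding e2 e1 by (simp only: mult.assoc mult.left_commute mult.commute)
  qed
  finally show ?thesis by simp
qed

lemma Qm_degree: "degree (Qm a b m) \<le> m - 1"
proof -
  have dj: "degree (smult (real (m choose (2*j+1)) * b^(2*j+1)) ([:0,a:]^(m-(2*j+1)) * [:1,0,-1:]^j)) \<le> m - 1" for j
  proof (cases "2*j+1 \<le> m")
    case True
    have "degree ([:0,a:]^(m-(2*j+1)) * [:1,0,-1:]^j) \<le> degree ([:0,a:]^(m-(2*j+1))) + degree ([:1,0,-1:]^j :: real poly)"
      by (rule degree_mult_le)
    also have "\<dots> \<le> (m-(2*j+1)) * 1 + j * 2"
      by (intro add_mono order_trans[OF degree_power_le]) auto
    also have "\<dots> = m - 1" using True by simp
    finally show ?thesis using degree_smult_le order_trans by blast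
  next
    case False
    then have "m choose (2*j+1) = 0" by simp
    then show ?thesis by simp
  qed
  show ?thesis unfolding Qm_def
    by (intro order_trans[OF degree_smult_le], rule degree_sum_le, simp, rule dj)
qed

lemma Qm_one: "poly (Qm a b m) 1 = -2 * real m * b * a^(m-1)"
proof -
  have "poly (Qm a b m) 1 = -2 * (\<Sum>j\<le>m. real (m choose (2*j+1)) * b^(2*j+1) * a^(m-(2*j+1)) * 0^j)"
    unfolding Qm_poly by simp
  also have "(\<Sum>j\<le>m. real (m choose (2*j+1)) * b^(2*j+1) * a^(m-(2*j+1)) * 0^j) = real m * b * a^(m-1)"
    by (subst sum.remove[of _ 0]) (auto intro!: sum.neutral)
  finally show ?thesis by simp
qed




lemma poly_monoms: "degree (p::real poly) \<le> n \<Longrightarrow> poly p y = (\<Sum>i\<le>n. coeff p i * y^i)"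
proof -
  assume "degree p \<le> n"
  then have "poly p y = poly (\<Sum>i\<le>n. monom (coeff p i) i) y" using poly_as_sum_of_monoms' by metis
  also have "\<dots> = (\<Sum>i\<le>n. coeff p i * y^i)" unfolding poly_sum by (intro sum.cong refl) (simp add: Polynomial.poly_monom)
  finally show ?thesis .
qed

lemma pderiv_monoms:
  fixes p :: "real poly"
  assumes "degree p \<le> n"
  shows "poly (pderiv p) a = (\<Sum>i\<le>n. coeff p i * (real i * a^(i-1)))"
proof -
  have d: "((\<lambda>y. \<Sum>i\<le>n. coeff p i * y^i) has_real_derivative (\<Sum>i\<le>n. coeff p i * (real i * a^(i-1)))) (at a)"
    using DERIV_pow by (intro DERIV_sum DERIV_cmult) simp
  have "(\<lambda>y. \<Sum>i\<le>n. coeff p i * y^i) = poly p" using poly_monoms[OF assms] by auto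
  with d have "(poly p has_real_derivative (\<Sum>i\<le>n. coeff p i * (real i * a^(i-1)))) (at a)" by simp
  then show ?thesis using poly_DERIV DERIV_unique by metis
qed

lemma unit_bound: fixes a b t s :: real
  assumes "b^2 = 1 - a^2" "s^2 = 1 - t^2"
  shows "\<bar>a*t + b * s\<bar> \<le> 1" "\<bar>a*t - b * s\<bar> \<le> 1"
proof -
  have "(a*t+b * s)^2 + (a * s-b*t)^2 = (a^2+b^2)*(t^2+s^2)" by algebra
  also have "\<dots> = 1" using assms by simp
  finally have "(a*t+b * s)^2 \<le> 1" by (smt (verit) zero_le_power2)
  then show "\<bar>a*t + b * s\<bar> \<le> 1" by (simp add: abs_square_le_1)
  have "(a*t-b * s)^2 + (a * s+b*t)^2 = (a^2+b^2)*(t^2+s^2)" by algebra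
  also have "\<dots> = 1" using assms by simp
  finally have "(a*t-b * s)^2 \<le> 1" by (smt (verit) zero_le_power2)
  then show "\<bar>a*t - b * s\<bar> \<le> 1" by (simp add: abs_square_le_1)
qed

lemma bernstein:
  fixes p :: "real poly"
  assumes n: "n \<ge> 1" and dp: "degree p \<le> n"
    and B: "\<And>y. -1 \<le> y \<Longrightarrow> y \<le> 1 \<Longrightarrow> \<bar>poly p y\<bar> \<le> B"
    and a: "-1 \<le> a" "a \<le> 1"
  shows "sqrt (1 - a^2) * \<bar>poly (pderiv p) a\<bar> \<le> real n * B"
proof -
  define b where "b = sqrt (1 - a^2)"
  have a2: "a^2 \<le> 1" using a by (simp add: abs_square_le_1)
  have b0: "0 \<le> b" unfolding b_def using a2 by simp
  have hb: "b^2 = 1 - a^2" unfolding b_def using a2 by simp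
  define Q where "Q = (\<Sum>i\<le>n. smult (coeff p i) (Qm a b i))"
  have dQ: "degree Q < n"
  proof -
    have "degree Q \<le> n - 1" unfolding Q_def
    proof (rule degree_sum_le)
      fix i assume "i \<in> {..n}"
      then have "degree (Qm a b i) \<le> n - 1" using Qm_degree[of a b i] by simp
      then show "degree (smult (coeff p i) (Qm a b i)) \<le> n - 1" using degree_smult_le order_trans by blast
    qed simp
    then show ?thesis using n by simp
  qed
  have Qeq: "s * poly Q c = poly p (a*c - b * s) - poly p (a*c + b * s)" if "s^2 = 1 - c^2" for s c
  proof -
    have "s * poly Q c = (\<Sum>i\<le>n. coeff p i * (s * poly (Qm a b i) c))"
      unfolding Q_def poly_sum poly_smult sum_distrib_left by (simp only: mult.left_commute)
    also have "\<dots> = (\<Sum>i\<le>n. coeff p i * ((a*c - b * s)^i - (a*c + b * s)^i))"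
      using Qm_eq[OF that] by simp
    also have "\<dots> = poly p (a*c - b * s) - poly p (a*c + b * s)"
      unfolding poly_monoms[OF dp] by (simp add: right_diff_distrib sum_subtractf)
    finally show ?thesis .
  qed
  have Q1: "poly Q 1 = -2 * b * poly (pderiv p) a"
    unfolding Q_def poly_sum poly_smult Qm_one pderiv_monoms[OF dp] sum_distrib_left
    by (intro sum.cong refl) (simp add: mult_ac)
  have nodes: "\<bar>poly Q (cnd n j)\<bar> * sin (cth n j) \<le> 2 * B" if j: "j < n" for j
  proof -
    let ?s = "sin (cth n j)" and ?t = "cnd n j"
    have s0: "0 < ?s" using sin_cth_pos[OF n j] .
    have st: "?s^2 = 1 - ?t^2" unfolding cnd_def by (simp add: sin_squared_eq)
    have "\<bar>poly Q ?t\<bar> * ?s = \<bar>?s * poly Q ?t\<bar>" using s0 by (simp add: abs_mult)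
    also have "\<dots> = \<bar>poly p (a*?t - b * ?s) - poly p (a*?t + b * ?s)\<bar>" using Qeq[OF st] by simp
    also have "\<dots> \<le> \<bar>poly p (a*?t - b * ?s)\<bar> + \<bar>poly p (a*?t + b * ?s)\<bar>" by (rule abs_triangle_ineq4)
    also have "\<dots> \<le> B + B"
      using unit_bound[OF hb st] by (intro add_mono B) (auto simp: abs_le_iff)
    finally show ?thesis by simp
  qed
  have "\<bar>poly Q 1\<bar> \<le> real n * (2 * B)"
    by (rule schur_out[OF n dQ nodes]) (auto simp: cnd_def)
  then have "2 * (b * \<bar>poly (pderiv p) a\<bar>) \<le> 2 * (real n * B)"
    unfolding Q1 using b0 by (simp add: abs_mult)
  then show ?thesis unfolding b_def by simp
qed




lemma sin_lb: assumes n: "n \<ge> (1::nat)" shows "1 / real n \<le> sin (pi / (2 * real n))"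
proof (cases "n = 1")
  case True then show ?thesis by simp
next
  case False
  then have n2: "real n \<ge> 2" using n by simp
  define y where "y = pi / (2 * real n)"
  have y0: "0 < y" unfolding y_def using n by simp
  have y1: "y \<le> pi / 4" unfolding y_def using n2 by (simp add: field_simps)
  then have y1': "y < 1" using pi_less_4 by linarith
  have yge: "y \<ge> 3 / (2 * real n)" unfolding y_def using n pi_gt3 by (simp add: field_simps)
  have "\<bar>sin y - (\<Sum>m<3. sin_coeff m * y ^ m)\<bar> \<le> inverse (fact 3) * \<bar>y\<bar> ^ 3"
    by (rule Maclaurin_sin_bound)
  moreover have "(\<Sum>m<3. sin_coeff m * y ^ m) = y"
    by (simp add: eval_nat_numeral sin_coeff_def)
  ultimately have "\<bar>sin y - y\<bar> \<le> inverse (fact 3) * \<bar>y\<bar> ^ 3" by simp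
  moreover have "inverse (fact 3) * \<bar>y\<bar> ^ 3 = y^3 / 6" using y0 by (simp add: fact_numeral field_simps)
  ultimately have "\<bar>sin y - y\<bar> \<le> y^3 / 6" by linarith
  then have "sin y \<ge> y - y^3 / 6" by (simp only: abs_le_iff) linarith
  moreover have "y * y \<le> 1" using y0 y1' by (intro mult_le_one) auto
  moreover have "y^3 \<le> y" using y0 y1' \<open>y * y \<le> 1\<close> by (simp add: power_le_one eval_nat_numeral mult_le_cancel_left1)
  ultimately have "sin y \<ge> 5/6 * y" by linarith
  moreover have "5/6 * (3 / (2 * real n)) \<ge> 1 / real n" using n by (simp add: field_simps)
  ultimately show ?thesis using yge unfolding y_def by linarith
qed

lemma markov:
  fixes p :: "real poly"
  assumes n: "n \<ge> 1" and dp: "degree p \<le> n"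
    and B: "\<And>y. -1 \<le> y \<Longrightarrow> y \<le> 1 \<Longrightarrow> \<bar>poly p y\<bar> \<le> B"
    and x: "-1 \<le> x" "x \<le> 1"
  shows "\<bar>poly (pderiv p) x\<bar> \<le> real n ^ 2 * B"
proof -
  have B0: "0 \<le> B" using B[of 0] by simp
  have dq: "degree (pderiv p) < n" using dp n by (simp add: degree_pderiv)
  have sn: "sin (cth n j) = sqrt (1 - (cnd n j)^2)" if "j < n" for j
    unfolding cnd_def using sin_cth_pos[OF n that] by (intro sin_cos_sqrt) simp
  have t1: "-1 \<le> cnd n j" "cnd n j \<le> 1" for j unfolding cnd_def by simp_all
  consider "cnd n 0 \<le> x" | "x \<le> - cnd n 0" | "\<bar>x\<bar> < cnd n 0" by linarith
  then show ?thesis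
  proof cases
    case 1
    have "\<bar>poly (pderiv p) x\<bar> \<le> real n * (real n * B)"
    proof (rule schur_out[OF n dq _ 1 x(2)])
      fix j assume j: "j < n"
      show "\<bar>poly (pderiv p) (cnd n j)\<bar> * sin (cth n j) \<le> real n * B"
        using bernstein[OF n dp B t1[of j]] sn[OF j] by (simp add: mult.commute)
    qed
    then show ?thesis by (simp add: power2_eq_square)
  next
    case 2
    define q where "q = pcompose (pderiv p) [:0,-1:]"
    have pq: "poly q y = poly (pderiv p) (-y)" for y unfolding q_def by (simp add: poly_pcompose)
    have dq': "degree q < n" unfolding q_def using dq by (simp add: degree_pcompose)
    have "\<bar>poly q (-x)\<bar> \<le> real n * (real n * B)"
    proof (rule schur_out[OF n dq'])
      fix j assume j: "j < n"
      have "-1 \<le> - cnd n j" "- cnd n j \<le> 1" using t1[of j] by simp_all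
      from bernstein[OF n dp B this] show "\<bar>poly q (cnd n j)\<bar> * sin (cth n j) \<le> real n * B"
        using sn[OF j] by (simp add: mult.commute pq)
    qed (use 2 x in auto)
    then show ?thesis by (simp add: pq power2_eq_square)
  next
    case 3
    have c0: "cnd n 0 = cos (pi / (2 * real n))" by (simp add: cnd_def cth_def)
    have "\<bar>x\<bar>^2 < (cnd n 0)^2" by (rule power_strict_mono[OF 3]) auto
    then have "x^2 < (cnd n 0)^2" by simp
    then have "x^2 < 1 - sin (pi / (2 * real n))^2" unfolding c0 by (simp add: cos_squared_eq)
    moreover have "(1 / real n)^2 \<le> sin (pi / (2 * real n))^2"
      using sin_lb[OF n] n by (intro power_mono) auto
    ultimately have "(1 / real n)^2 \<le> 1 - x^2" by linarith
    then have sq: "1 / real n \<le> sqrt (1 - x^2)" using real_le_rsqrt by simp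
    have bx: "sqrt (1 - x^2) * \<bar>poly (pderiv p) x\<bar> \<le> real n * B" by (rule bernstein[OF n dp B x])
    have "\<bar>poly (pderiv p) x\<bar> = real n * ((1 / real n) * \<bar>poly (pderiv p) x\<bar>)" using n by simp
    also have "\<dots> \<le> real n * (sqrt (1 - x^2) * \<bar>poly (pderiv p) x\<bar>)"
      using sq by (intro mult_left_mono mult_right_mono) auto
    also have "\<dots> \<le> real n * (real n * B)" using bx by (intro mult_left_mono) auto
    finally show ?thesis by (simp add: power2_eq_square)
  qed
qed




lemma supnorm_ub:
  assumes "continuous_on {-1..1} f" "t \<in> {-1..1}"
  shows "\<bar>f t\<bar> \<le> supnorm f"
proof -
  have "continuous_on {-1..1} (\<lambda>t. \<bar>f t\<bar>)" using assms(1) by (intro continuous_intros)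
  then have "compact ((\<lambda>t. \<bar>f t\<bar>) ` {-1..1})" by (intro compact_continuous_image) auto
  then have "bdd_above ((\<lambda>t. \<bar>f t\<bar>) ` {-1..1})" by (intro bounded_imp_bdd_above compact_imp_bounded)
  then show ?thesis unfolding supnorm_def using assms(2) by (rule cSUP_upper2) simp
qed

lemma supnorm_lb:
  assumes "\<And>t. t \<in> {-1..1} \<Longrightarrow> \<bar>f t\<bar> \<le> C"
  shows "supnorm f \<le> C"
  unfolding supnorm_def using assms by (intro cSUP_least) auto

theorem proposition2p1:
  fixes N :: nat and \<tau> :: "nat \<Rightarrow> real" and x x' :: "real \<Rightarrow> real" and xN :: "real poly"
  assumes "N \<ge> 1"
    and "strict_mono_on {0..N} \<tau>" and "-1 \<le> \<tau> 0" and "\<tau> N \<le> 1"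
    and "\<And>t. t \<in> {-1..1} \<Longrightarrow> (x has_real_derivative x' t) (at t within {-1..1})"
    and "continuous_on {-1..1} x'"
    and "degree xN \<le> N" and "\<And>k. k \<le> N \<Longrightarrow> poly xN (\<tau> k) = x (\<tau> k)"
  shows "supnorm (\<lambda>t. x' t - poly (pderiv xN) t)
     \<le> (1 + 2 * real N ^ 2) * (INF q\<in>{q :: real poly. degree q \<le> N}. supnorm (\<lambda>t. x' t - poly (pderiv q) t))
       + real N ^ 2 * (1 + lebesgue_const \<tau> N) * (INF p\<in>{p :: real poly. degree p \<le> N}. supnorm (\<lambda>t. x t - poly p t))"
proof -
  note N = assms(1) and xd = assms(5) and x'c = assms(6) and dxN = assms(7) and xNi = assms(8)
  let ?E = "\<lambda>p. supnorm (\<lambda>t. x t - poly p t)"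
  let ?D = "\<lambda>q. supnorm (\<lambda>t. x' t - poly (pderiv q) t)"
  let ?\<Lambda> = "lebesgue_const \<tau> N"
  let ?LHS = "supnorm (\<lambda>t. x' t - poly (pderiv xN) t)"
  have xc: "continuous_on {-1..1} x" by (rule DERIV_continuous_on[OF xd])
  have tau: "-1 \<le> \<tau> k" "\<tau> k \<le> 1" if "k \<le> N" for k
  proof -
    have "\<tau> 0 \<le> \<tau> k" "\<tau> k \<le> \<tau> N" using that by (auto intro!: strict_mono_on_leD[OF assms(2)])
    then show "-1 \<le> \<tau> k" "\<tau> k \<le> 1" using assms(3,4) by linarith+
  qed
  have inj: "inj_on \<tau> {0..N}" by (rule strict_mono_on_imp_inj_on[OF assms(2)])
  have interp: "poly r t = (\<Sum>j\<in>{0..N}. poly r (\<tau> j) * lagrange_basis \<tau> N j t)" if "degree r \<le> N" for r t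
    unfolding lagrange_basis_def using lagrange_interp[of "{0..N}" \<tau> r t] inj that by simp
  have Lc: "continuous_on {-1..1} (\<lambda>t. \<Sum>j\<in>{0..N}. \<bar>lagrange_basis \<tau> N j t\<bar>)"
    unfolding lagrange_basis_def by (intro continuous_intros) (use inj in \<open>auto simp: inj_on_def\<close>)
  have Lub: "(\<Sum>j\<in>{0..N}. \<bar>lagrange_basis \<tau> N j t\<bar>) \<le> ?\<Lambda>" if t: "t \<in> {-1..1}" for t
  proof -
    have "compact ((\<lambda>t. \<Sum>j\<in>{0..N}. \<bar>lagrange_basis \<tau> N j t\<bar>) ` {-1..1})"
      using Lc by (intro compact_continuous_image) auto
    then have "bdd_above ((\<lambda>t. \<Sum>j\<in>{0..N}. \<bar>lagrange_basis \<tau> N j t\<bar>) ` {-1..1})"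
      by (intro bounded_imp_bdd_above compact_imp_bounded)
    then show ?thesis unfolding lebesgue_const_def using t by (rule cSUP_upper2) simp
  qed
  have L0: "0 \<le> ?\<Lambda>" using Lub[of 0] by (smt (verit) atLeastAtMost_iff sum_nonneg abs_ge_zero)
  have interr: "\<bar>poly xN t - poly p t\<bar> \<le> ?\<Lambda> * ?E p" if p: "degree p \<le> N" and t: "t \<in> {-1..1}" for p t
  proof -
    have pc: "continuous_on {-1..1} (\<lambda>t. x t - poly p t)" using xc by (intro continuous_intros)
    have "degree (xN - p) \<le> N" using dxN p by (simp add: degree_diff_le)
    from interp[OF this, of t]
    have "poly xN t - poly p t = (\<Sum>j\<in>{0..N}. (x (\<tau> j) - poly p (\<tau> j)) * lagrange_basis \<tau> N j t)"
      using xNi by simp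
    also have "\<bar>\<dots>\<bar> \<le> (\<Sum>j\<in>{0..N}. \<bar>(x (\<tau> j) - poly p (\<tau> j)) * lagrange_basis \<tau> N j t\<bar>)"
      by (rule sum_abs)
    also have "\<dots> \<le> (\<Sum>j\<in>{0..N}. ?E p * \<bar>lagrange_basis \<tau> N j t\<bar>)"
    proof (intro sum_mono)
      fix j assume "j \<in> {0..N}"
      then have "\<tau> j \<in> {-1..1}" using tau[of j] by auto
      then have "\<bar>x (\<tau> j) - poly p (\<tau> j)\<bar> \<le> ?E p" using supnorm_ub[OF pc] by blast
      then show "\<bar>(x (\<tau> j) - poly p (\<tau> j)) * lagrange_basis \<tau> N j t\<bar> \<le> ?E p * \<bar>lagrange_basis \<tau> N j t\<bar>"
        by (simp add: abs_mult mult_right_mono)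
    qed
    also have "\<dots> = ?E p * (\<Sum>j\<in>{0..N}. \<bar>lagrange_basis \<tau> N j t\<bar>)" by (simp add: sum_distrib_left)
    also have "\<dots> \<le> ?E p * ?\<Lambda>"
    proof (rule mult_left_mono[OF Lub[OF t]])
      show "0 \<le> ?E p" using supnorm_ub[OF pc, of 0] by simp
    qed
    finally show ?thesis by (simp add: mult.commute)
  qed
  have mvt: "\<bar>x t - poly (q + [:x 0 - poly q 0:]) t\<bar> \<le> ?D q" if t: "t \<in> {-1..1}" for q t
  proof -
    define q0 where "q0 = q + [:x 0 - poly q 0:]"
    have pq0: "pderiv q0 = pderiv q" unfolding q0_def by (simp add: pderiv_add pderiv_pCons)
    have dc: "continuous_on {-1..1} (\<lambda>t. x' t - poly (pderiv q) t)" using x'c by (intro continuous_intros)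
    have "norm ((x t - poly q0 t) - (x 0 - poly q0 0)) \<le> ?D q * norm (t - 0)"
    proof (rule field_differentiable_bound[where f="\<lambda>t. x t - poly q0 t" and S="{-1..1}"])
      fix z :: real assume z: "z \<in> {-1..1}"
      have "((\<lambda>t. poly q0 t) has_real_derivative poly (pderiv q) z) (at z within {-1..1})"
        using poly_DERIV[of q0 z] pq0 by (simp add: has_field_derivative_at_within)
      then show "((\<lambda>t. x t - poly q0 t) has_field_derivative (x' z - poly (pderiv q) z)) (at z within {-1..1})"
        using xd[OF z] by (intro DERIV_diff)
      show "norm (x' z - poly (pderiv q) z) \<le> ?D q" using supnorm_ub[OF dc z] by simp
    qed (use t in auto)
    moreover have "x 0 - poly q0 0 = 0" unfolding q0_def by simp
    moreover have "\<bar>t\<bar> \<le> 1" using t by auto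
    moreover have "0 \<le> ?D q" using supnorm_ub[OF dc, of 0] by simp
    ultimately have "\<bar>x t - poly q0 t\<bar> \<le> ?D q * \<bar>t\<bar>" "?D q * \<bar>t\<bar> \<le> ?D q"
      by (auto intro: mult_left_le)
    then show ?thesis unfolding q0_def by linarith
  qed
  have main: "?LHS \<le> (1 + 2 * real N ^ 2) * ?D q + real N ^ 2 * (1 + ?\<Lambda>) * ?E p"
    if q: "degree q \<le> N" and p: "degree p \<le> N" for q p
  proof (rule supnorm_lb)
    fix t :: real assume t: "t \<in> {-1..1}"
    define q0 where "q0 = q + [:x 0 - poly q 0:]"
    define r where "r = q0 - xN"
    have pq0: "pderiv q0 = pderiv q" unfolding q0_def by (simp add: pderiv_add pderiv_pCons)
    have dq0: "degree q0 \<le> N" unfolding q0_def using q by (intro degree_add_le) auto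
    have dr: "degree r \<le> N" unfolding r_def using dq0 dxN by (intro degree_diff_le)
    have dc: "continuous_on {-1..1} (\<lambda>t. x' t - poly (pderiv q) t)" using x'c by (intro continuous_intros)
    have pc: "continuous_on {-1..1} (\<lambda>t. x t - poly p t)" using xc by (intro continuous_intros)
    have D0: "0 \<le> ?D q" using supnorm_ub[OF dc, of 0] by simp
    have Br: "\<bar>poly r y\<bar> \<le> ?D q + (1 + ?\<Lambda>) * ?E p" if y: "-1 \<le> y" "y \<le> 1" for y
    proof -
      have y': "y \<in> {-1..1}" using y by simp
      have "\<bar>poly r y\<bar> \<le> \<bar>x y - poly q0 y\<bar> + \<bar>x y - poly p y\<bar> + \<bar>poly xN y - poly p y\<bar>"
        unfolding r_def by simp
      moreover have "\<bar>x y - poly q0 y\<bar> \<le> ?D q" unfolding q0_def by (rule mvt[OF y'])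
      moreover have "\<bar>x y - poly p y\<bar> \<le> ?E p" using supnorm_ub[OF pc y'] by simp
      moreover have "\<bar>poly xN y - poly p y\<bar> \<le> ?\<Lambda> * ?E p" by (rule interr[OF p y'])
      ultimately show ?thesis by (simp add: algebra_simps)
    qed
    have M: "\<bar>poly (pderiv r) t\<bar> \<le> real N ^ 2 * (?D q + (1 + ?\<Lambda>) * ?E p)"
      using t by (intro markov[OF N dr Br]) auto
    have "pderiv r = pderiv q - pderiv xN" unfolding r_def by (simp add: pderiv_diff pq0)
    then have "\<bar>x' t - poly (pderiv xN) t\<bar> \<le> \<bar>x' t - poly (pderiv q) t\<bar> + \<bar>poly (pderiv r) t\<bar>"
      by simp
    also have "\<dots> \<le> ?D q + real N ^ 2 * (?D q + (1 + ?\<Lambda>) * ?E p)"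
      using supnorm_ub[OF dc t] M by simp
    also have "\<dots> \<le> (1 + 2 * real N ^ 2) * ?D q + real N ^ 2 * (1 + ?\<Lambda>) * ?E p"
      using D0 by (simp add: algebra_simps)
    finally show "\<bar>x' t - poly (pderiv xN) t\<bar> \<le> (1 + 2 * real N ^ 2) * ?D q + real N ^ 2 * (1 + ?\<Lambda>) * ?E p" .
  qed
  define a where "a = 1 + 2 * real N ^ 2"
  define b where "b = real N ^ 2 * (1 + ?\<Lambda>)"
  have a0: "0 < a" unfolding a_def by (simp add: add_pos_nonneg)
  have b0: "0 < b" unfolding b_def using N L0 by (simp add: add_pos_nonneg)
  have ne: "{q :: real poly. degree q \<le> N} \<noteq> {}" by (auto intro!: exI[of _ 0])
  have step1: "?LHS - a * (INF q\<in>{q :: real poly. degree q \<le> N}. ?D q) \<le> b * ?E p" if p: "degree p \<le> N" for p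
  proof -
    have "(?LHS - b * ?E p) / a \<le> (INF q\<in>{q :: real poly. degree q \<le> N}. ?D q)"
    proof (rule cINF_greatest[OF ne])
      fix q assume "q \<in> {q :: real poly. degree q \<le> N}"
      then have "?LHS \<le> a * ?D q + b * ?E p" using main[OF _ p] unfolding a_def b_def by simp
      then show "(?LHS - b * ?E p) / a \<le> ?D q" using a0 by (simp add: field_simps)
    qed
    then show ?thesis using a0 by (simp add: field_simps)
  qed
  have "(?LHS - a * (INF q\<in>{q :: real poly. degree q \<le> N}. ?D q)) / b \<le> (INF p\<in>{p :: real poly. degree p \<le> N}. ?E p)"
  proof (rule cINF_greatest[OF ne])
    fix p assume "p \<in> {p :: real poly. degree p \<le> N}"
    then show "(?LHS - a * (INF q\<in>{q :: real poly. degree q \<le> N}. ?D q)) / b \<le> ?E p"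
      using step1 b0 by (simp add: field_simps)
  qed
  then show ?thesis using b0 unfolding a_def b_def by (simp add: field_simps)
qed


end
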